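(* Let $\beta>0$ and let the full-system state be decomposed as $\mathbf{s}=(\mathbf{s}_1,\dots,\mathbf{s}_K,\mathbf{s}_{\mathrm{env}})$, with total energy $$V_{\mathrm{tot}}(\mathbf{s})=\sum_{i=1}^K U_i(\mathbf{s}_i)+U_{\mathrm{env}}(\mathbf{s}_{\mathrm{env}})+U_{\mathrm{int}}(\mathbf{s}_1,\dots,\mathbf{s}_K,\mathbf{s}_{\mathrm{env}})$$ and true Boltzmann density $\pi(\mathbf{s})\propto\exp(-\beta V_{\mathrm{tot}}(\mathbf{s}))$. Assume that the priors are $p_i(\mathbf{x}_i)\propto\exp(-\beta U_i(\mathbf{x}_i))$ for $i=1,\dots,K$, that the projectors are $\Phi_i(\mathbf{s})=\mathbf{s}_i$, and that the context factor is $$\pi_{\mathrm{ctx}}(\mathbf{s})\propto\exp\!\Big(-\beta\big[U_{\mathrm{env}}(\mathbf{s}_{\mathrm{env}})+U_{\mathrm{int}}(\mathbf{s}_1,\dots,\mathbf{s}_K,\mathbf{s}_{\mathrm{env}})\big]\Big).$$ Then the $t\to0$ joint target $\pi_0$ (defined in the context), after marginalizing out $\mathbf{s}_1,\dots,\mathbf{s}_K$, satisfies $$\pi_0(\{\mathbf{x}_i\},\mathbf{s}_{\mathrm{env}})\propto\exp\!\big(-\beta V_{\mathrm{tot}}(\mathbf{x}_1,\dots,\mathbf{x}_K,\mathbf{s}_{\mathrm{env}})\big).$$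
   Context: Setting: there are $K$ prior variables $\mathbf{x}_i\in\mathcal{X}_i$, each with a prior density $p_i(\mathbf{x}_i)$ and a forward diffusion kernel $q_t^{(i)}(\mathbf{y}\mid\mathbf{x}_i)$ indexed by diffusion time $t\in[0,1]$, satisfying $\lim_{t\to0}q_t^{(i)}(\mathbf{y}\mid\mathbf{x}_i)=\delta(\mathbf{y}-\mathbf{x}_i)$ (Dirac delta). Projections $\Phi_i:\mathcal{S}\to\mathcal{X}_i$ map the full-system state $\mathbf{s}\in\mathcal{S}$ to the prior variables. A context schedule $q_{\mathrm{ctx}}(\mathbf{s},t)$ with $q_{\mathrm{ctx}}(\mathbf{s},0)=\pi_{\mathrm{ctx}}(\mathbf{s})$ is given. The joint target on $\mathcal{S}\times\prod_i\mathcal{X}_i$ is $$\pi_t(\mathbf{s},\{\mathbf{x}_i\})\propto q_{\mathrm{ctx}}(\mathbf{s},t)\prod_{i=1}^K p_i(\mathbf{x}_i)\,q_t^{(i)}(\Phi_i(\mathbf{s})\mid\mathbf{x}_i),$$ and its $t\to0$ limit is $$\pi_0(\mathbf{s},\{\mathbf{x}_i\})\propto\pi_{\mathrm{ctx}}(\mathbf{s})\prod_{i=1}^K p_i(\mathbf{x}_i)\,\delta(\Phi_i(\mathbf{s})-\mathbf{x}_i).$$ *)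

theory Defs
  imports "HOL-Analysis.Analysis"
begin

definition V_tot :: "'i set \<Rightarrow> ('i \<Rightarrow> 'a \<Rightarrow> real) \<Rightarrow> ('e \<Rightarrow> real)
    \<Rightarrow> (('i \<Rightarrow> 'a) \<Rightarrow> 'e \<Rightarrow> real) \<Rightarrow> ('i \<Rightarrow> 'a) \<Rightarrow> 'e \<Rightarrow> real" where
  "V_tot I U Uenv Uint f e = (\<Sum>i\<in>I. U i (f i)) + Uenv e + Uint f e"

text \<open>The t -> 0 joint target pi_0(s,{x_i}) proportional to
  pi_ctx(s) prod_i p_i(x_i) delta(Phi_i(s) - x_i), as an (unnormalised) measure on
  S x prod_i X_i: the Dirac factors force x_i = Phi_i(s), so pi_0 is the image of the
  measure with density pi_ctx(s) prod_i p_i(Phi_i s) on S under s |-> (s, (Phi_i s)_i).\<close>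
definition joint_target0 :: "'s measure \<Rightarrow> 'i set \<Rightarrow> ('i \<Rightarrow> 'a measure) \<Rightarrow> ('s \<Rightarrow> real)
    \<Rightarrow> ('i \<Rightarrow> 'a \<Rightarrow> real) \<Rightarrow> ('i \<Rightarrow> 's \<Rightarrow> 'a) \<Rightarrow> ('s \<times> ('i \<Rightarrow> 'a)) measure" where
  "joint_target0 S I X ctx p \<Phi> =
     distr (density S (\<lambda>s. ennreal (ctx s * (\<Prod>i\<in>I. p i (\<Phi> i s)))))
           (S \<Otimes>\<^sub>M PiM I X) (\<lambda>s. (s, \<lambda>i\<in>I. \<Phi> i s))"

end

theory Submission
  imports Defs
begin

lemma density_cong_space:
  assumes "\<And>x. x \<in> space M \<Longrightarrow> f x = g x"
  shows "density M f = density M g"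
  unfolding density_def
  by (rule arg_cong[where f="measure_of (space M) (sets M)"], rule ext, rule nn_integral_cong)
     (simp add: assms)

lemma m1: fixes I :: "'i set" and M :: "'i \<Rightarrow> 'a measure" and E :: "'e measure"
  shows "(\<lambda>s. (s, \<lambda>i\<in>I. fst s i)) \<in> (PiM I M \<Otimes>\<^sub>M E) \<rightarrow>\<^sub>M (PiM I M \<Otimes>\<^sub>M E) \<Otimes>\<^sub>M PiM I M"
proof (rule measurable_Pair)
  show "(\<lambda>s. s) \<in> (PiM I M \<Otimes>\<^sub>M E) \<rightarrow>\<^sub>M (PiM I M \<Otimes>\<^sub>M E)" by (rule measurable_ident_sets) (rule refl)
  show "(\<lambda>s. \<lambda>i\<in>I. fst s i) \<in> (PiM I M \<Otimes>\<^sub>M E) \<rightarrow>\<^sub>M PiM I M"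
  proof (rule measurable_restrict)
    fix i assume i: "i \<in> I"
    show "(\<lambda>s. fst s i) \<in> (PiM I M \<Otimes>\<^sub>M E) \<rightarrow>\<^sub>M M i"
      by (rule measurable_compose[OF measurable_fst measurable_component_singleton[OF i]])
  qed
qed
lemma m2: fixes I :: "'i set" and M :: "'i \<Rightarrow> 'a measure" and E :: "'e measure"
  shows "(\<lambda>(s, x). (x, snd s)) \<in> (PiM I M \<Otimes>\<^sub>M E) \<Otimes>\<^sub>M PiM I M \<rightarrow>\<^sub>M (PiM I M \<Otimes>\<^sub>M E)"
  unfolding case_prod_beta
  by (rule measurable_Pair[OF measurable_snd measurable_compose[OF measurable_fst measurable_snd]])

theorem proposition1:
  fixes I :: "'i set" and M :: "'i \<Rightarrow> 'a measure" and E :: "'e measure"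
    and \<beta> :: real
    and U :: "'i \<Rightarrow> 'a \<Rightarrow> real" and Uenv :: "'e \<Rightarrow> real"
    and Uint :: "('i \<Rightarrow> 'a) \<Rightarrow> 'e \<Rightarrow> real"
    and p :: "'i \<Rightarrow> 'a \<Rightarrow> real" and pctx :: "('i \<Rightarrow> 'a) \<times> 'e \<Rightarrow> real"
  assumes "finite I"
    and "\<beta> > 0"
    and "\<And>i. i \<in> I \<Longrightarrow> U i \<in> borel_measurable (M i)"
    and "Uenv \<in> borel_measurable E"
    and "(\<lambda>(f, e). Uint f e) \<in> borel_measurable (PiM I M \<Otimes>\<^sub>M E)"
    and "\<And>i. i \<in> I \<Longrightarrow> \<exists>c>0. \<forall>x\<in>space (M i). p i x = c * exp (- \<beta> * U i x)"
    and "\<exists>c>0. \<forall>s\<in>space (PiM I M \<Otimes>\<^sub>M E).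
           pctx s = c * exp (- \<beta> * (Uenv (snd s) + Uint (fst s) (snd s)))"
  shows "\<exists>c>0.
    distr (joint_target0 (PiM I M \<Otimes>\<^sub>M E) I M pctx p (\<lambda>i s. fst s i))
          (PiM I M \<Otimes>\<^sub>M E) (\<lambda>(s, x). (x, snd s))
    = density (PiM I M \<Otimes>\<^sub>M E)
        (\<lambda>(x, e). ennreal (c * exp (- \<beta> * V_tot I U Uenv Uint x e)))"
proof -
  let ?S = "PiM I M \<Otimes>\<^sub>M E"
  obtain c0 where c0: "c0 > 0" "\<forall>s\<in>space ?S.
           pctx s = c0 * exp (- \<beta> * (Uenv (snd s) + Uint (fst s) (snd s)))"
    using assms(7) by blast
  define cs where "cs i = (SOME c. c > 0 \<and> (\<forall>x\<in>space (M i). p i x = c * exp (- \<beta> * U i x)))" for i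
  have cs: "cs i > 0 \<and> (\<forall>x\<in>space (M i). p i x = cs i * exp (- \<beta> * U i x))" if "i \<in> I" for i
    unfolding cs_def by (rule someI_ex) (use assms(6)[OF that] in blast)
  define C where "C = c0 * (\<Prod>i\<in>I. cs i)"
  have Cpos: "C > 0" unfolding C_def using c0 cs by (simp add: prod_pos)
  let ?g = "\<lambda>s. ennreal (pctx s * (\<Prod>i\<in>I. p i (fst s i)))"
  have meas1: "(\<lambda>s. (s, \<lambda>i\<in>I. fst s i)) \<in> ?S \<rightarrow>\<^sub>M ?S \<Otimes>\<^sub>M PiM I M"
    by (rule m1)
  have meas2: "(\<lambda>(s, x). (x, snd s)) \<in> ?S \<Otimes>\<^sub>M PiM I M \<rightarrow>\<^sub>M ?S"
    by (rule m2)
  have "distr (joint_target0 ?S I M pctx p (\<lambda>i s. fst s i)) ?S (\<lambda>(s, x). (x, snd s))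
      = distr (density ?S ?g) ?S ((\<lambda>(s, x). (x, snd s)) \<circ> (\<lambda>s. (s, \<lambda>i\<in>I. fst s i)))"
    unfolding joint_target0_def
    by (rule distr_distr[OF meas2]) (simp only: measurable_density_eq1 meas1)
  also have "\<dots> = distr (density ?S ?g) ?S (\<lambda>s. s)"
  proof (rule distr_cong)
    fix s assume "s \<in> space (density ?S ?g)"
    then have "s \<in> space ?S" by simp
    then have "fst s \<in> space (PiM I M)" by (simp add: space_pair_measure mem_Times_iff)
    then have "restrict (fst s) I = fst s" by (simp add: space_PiM PiE_def extensional_restrict)
    then show "((\<lambda>(s, x). (x, snd s)) \<circ> (\<lambda>s. (s, \<lambda>i\<in>I. fst s i))) s = s"
      by simp
  qed auto
  also have "\<dots> = density ?S ?g"
    by (rule distr_id2) simp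
  also have "\<dots> = density ?S (\<lambda>(x, e). ennreal (C * exp (- \<beta> * V_tot I U Uenv Uint x e)))"
  proof (rule density_cong_space)
      fix s assume s: "s \<in> space ?S"
      then have fs: "fst s \<in> space (PiM I M)" by (simp add: space_pair_measure mem_Times_iff)
      have pi: "p i (fst s i) = cs i * exp (- \<beta> * U i (fst s i))" if "i \<in> I" for i
        using cs[OF that] fs that by (auto simp: space_PiM)
      have "pctx s * (\<Prod>i\<in>I. p i (fst s i)) =
          c0 * exp (- \<beta> * (Uenv (snd s) + Uint (fst s) (snd s))) *
          ((\<Prod>i\<in>I. cs i) * (\<Prod>i\<in>I. exp (- \<beta> * U i (fst s i))))"
      proof -
        have "(\<Prod>i\<in>I. p i (fst s i)) = (\<Prod>i\<in>I. cs i * exp (- \<beta> * U i (fst s i)))"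
          by (rule prod.cong[OF refl]) (rule pi)
        also have "\<dots> = (\<Prod>i\<in>I. cs i) * (\<Prod>i\<in>I. exp (- \<beta> * U i (fst s i)))"
          by (rule prod.distrib)
        finally show ?thesis using c0(2) s by simp
      qed
      also have "(\<Prod>i\<in>I. exp (- \<beta> * U i (fst s i))) = exp (\<Sum>i\<in>I. - \<beta> * U i (fst s i))"
        by (simp add: exp_sum assms(1))
      also have "c0 * exp (- \<beta> * (Uenv (snd s) + Uint (fst s) (snd s))) *
          ((\<Prod>i\<in>I. cs i) * exp (\<Sum>i\<in>I. - \<beta> * U i (fst s i)))
          = C * exp (- \<beta> * V_tot I U Uenv Uint (fst s) (snd s))"
      proof -
        have e: "exp (- \<beta> * (Uenv (snd s) + Uint (fst s) (snd s))) * exp (\<Sum>i\<in>I. - \<beta> * U i (fst s i))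
          = exp (- \<beta> * ((\<Sum>i\<in>I. U i (fst s i)) + Uenv (snd s) + Uint (fst s) (snd s)))"
          unfolding exp_add[symmetric] sum_distrib_left[symmetric] by (simp add: algebra_simps)
        have r: "c0 * exp (- \<beta> * (Uenv (snd s) + Uint (fst s) (snd s))) *
          ((\<Prod>i\<in>I. cs i) * exp (\<Sum>i\<in>I. - \<beta> * U i (fst s i)))
          = (c0 * (\<Prod>i\<in>I. cs i)) * (exp (- \<beta> * (Uenv (snd s) + Uint (fst s) (snd s))) * exp (\<Sum>i\<in>I. - \<beta> * U i (fst s i)))"
          by (simp only: ac_simps)
        show ?thesis unfolding r e C_def V_tot_def by (rule refl)
      qed
      finally show "?g s = (\<lambda>(x, e). ennreal (C * exp (- \<beta> * V_tot I U Uenv Uint x e))) s"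
        by (simp add: case_prod_beta)
  qed
  finally show ?thesis using Cpos by blast
qed

end
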